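(* Let $\mathcal{H}$ be a finite nonempty set of humans with embeddings $\mathbf{e}_h\in\mathbb{R}^d$, let $\mathcal{L}$ be a finite set of agents with embeddings $\mathbf{e}_l\in\mathbb{R}^d$, and let $\operatorname{dist}$ be a metric on $\mathbb{R}^d$. Let $\rho\ge0$ and suppose that for each $h\in\mathcal{H}$ a proxy agent $l_h$ with embedding $\mathbf{e}_{l_h}$ is given satisfying $\operatorname{dist}(\mathbf{e}_h,\mathbf{e}_{l_h})\le\rho$; let $\tilde{\mathcal{L}}=\{l_h: h\in\mathcal{H}\}$ (an indexed family, one proxy per human). Let $D_{\max}$ be strictly larger than every distance between any two of the embeddings of elements of $\mathcal{H}\cup\mathcal{L}\cup\tilde{\mathcal{L}}$. For any finite indexed family $S$ of objects with embeddings, define $$f(S)=\frac{1}{|\mathcal{H}|}\sum_{h\in\mathcal{H}}\Big[D_{\max}-\min_{s\in S}\operatorname{dist}(\mathbf{e}_h,\mathbf{e}_s)\Big],$$ with $\min$ over the empty family equal to $D_{\max}$. Let $1\le M\le|\mathcal{H}|$, let $L^*_{\mathcal{L}}\in\arg\max_{L\subseteq\mathcal{L},|L|\le M}f(L)$, let $L^*_{\mathcal{H}}\in\arg\max_{S\subseteq\mathcal{H},|S|\le M}f(S)$ (humans themselves used as candidates, with their own embeddings), and define the human coverage ratio $\gamma=f(L^*_{\mathcal{H}})/f(L^*_{\mathcal{L}})$ (assume $f(L^*_{\mathcal{L}})>0$). Let $L^{\text{greedy}}_{\tilde{\mathcal{L}}}$ be the output of the greedy algorithm on $\tilde{\mathcal{L}}$: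 start with $L=\emptyset$ and for $i=1,\dots,M$ add an element $l\in\tilde{\mathcal{L}}\setminus L$ maximizing $f(L\cup\{l\})-f(L)$ (ties broken arbitrarily). Then $$f\big(L^{\text{greedy}}_{\tilde{\mathcal{L}}}\big)\;\ge\;\Big(1-\frac1e\Big)\Big(\gamma\cdot f(L^*_{\mathcal{L}})-\rho\Big).$$
   Context: Here $\rho$ is the "imitation error" bound: each proxy $l_h$ lies in the $\rho$-neighborhood of $h$ in embedding space. Humans and agents are both compared via their behavior embeddings in $\mathbb{R}^d$ and the metric $\operatorname{dist}$. *)

theory Defs
  imports "HOL-Analysis.Analysis"
begin

definition min_dist :: "('v \<Rightarrow> 'v \<Rightarrow> real) \<Rightarrow> real \<Rightarrow> 'v \<Rightarrow> 'i set \<Rightarrow> ('i \<Rightarrow> 'v) \<Rightarrow> real" where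
  "min_dist d Dmax x I e = (if I = {} then Dmax else Min ((\<lambda>s. d x (e s)) ` I))"

definition cov :: "('v \<Rightarrow> 'v \<Rightarrow> real) \<Rightarrow> real \<Rightarrow> 'h set \<Rightarrow> ('h \<Rightarrow> 'v) \<Rightarrow> 'i set \<Rightarrow> ('i \<Rightarrow> 'v) \<Rightarrow> real" where
  "cov d Dmax H eh I e = (\<Sum>h\<in>H. Dmax - min_dist d Dmax (eh h) I e) / real (card H)"

definition greedy_run :: "('v \<Rightarrow> 'v \<Rightarrow> real) \<Rightarrow> real \<Rightarrow> 'h set \<Rightarrow> ('h \<Rightarrow> 'v) \<Rightarrow> 'i set \<Rightarrow> ('i \<Rightarrow> 'v) \<Rightarrow> nat \<Rightarrow> 'i list \<Rightarrow> bool" where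
  "greedy_run d Dmax H eh C e M gs \<longleftrightarrow>
     length gs = M \<and>
     (\<forall>i<M. gs ! i \<in> C - set (take i gs) \<and>
        (\<forall>l\<in>C - set (take i gs).
           cov d Dmax H eh (insert l (set (take i gs))) e - cov d Dmax H eh (set (take i gs)) e
           \<le> cov d Dmax H eh (insert (gs ! i) (set (take i gs))) e - cov d Dmax H eh (set (take i gs)) e))"

end

theory Submission
  imports Defs
begin

lemma md_insert:
  assumes "finite G" "d x (e u) \<le> Dmax" "\<forall>g\<in>G. d x (e g) \<le> Dmax"
  shows "min_dist d Dmax x (insert u G) e = min (d x (e u)) (min_dist d Dmax x G e)"
  using assms by (cases "G = {}") (auto simp: min_dist_def min_def)

lemma md_le: "finite I \<Longrightarrow> i \<in> I \<Longrightarrow> min_dist d Dmax x I e \<le> d x (e i)"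
  by (auto simp: min_dist_def)

lemma md_ub: "finite I \<Longrightarrow> \<forall>i\<in>I. d x (e i) \<le> Dmax \<Longrightarrow> min_dist d Dmax x I e \<le> Dmax"
proof (cases "I = {}")
  case False
  assume a: "finite I" "\<forall>i\<in>I. d x (e i) \<le> Dmax"
  then obtain i where "i \<in> I" using False by auto
  then show ?thesis using md_le[OF a(1) \<open>i \<in> I\<close>, of d Dmax x e] a(2) by auto
qed (auto simp: min_dist_def)

lemma md_attain: "finite I \<Longrightarrow> I \<noteq> {} \<Longrightarrow> \<exists>i\<in>I. min_dist d Dmax x I e = d x (e i)"
proof -
  assume "finite I" "I \<noteq> {}"
  then have "Min ((\<lambda>s. d x (e s)) ` I) \<in> (\<lambda>s. d x (e s)) ` I" by (intro Min_in) auto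
  then show ?thesis using \<open>I \<noteq> {}\<close> by (auto simp: min_dist_def)
qed

lemma pw:
  assumes G: "finite G" and Q: "finite Q" and b: "\<forall>g\<in>G \<union> Q. d x (e g) \<le> Dmax"
  shows "min_dist d Dmax x G e - min_dist d Dmax x Q e
     \<le> (\<Sum>u\<in>Q-G. min_dist d Dmax x G e - min_dist d Dmax x (insert u G) e)"
proof -
  have nn: "\<And>u. u \<in> Q - G \<Longrightarrow> 0 \<le> min_dist d Dmax x G e - min_dist d Dmax x (insert u G) e"
  proof -
    fix u assume u: "u \<in> Q - G"
    have "min_dist d Dmax x (insert u G) e = min (d x (e u)) (min_dist d Dmax x G e)"
      using u b by (intro md_insert[OF G]) auto
    then show "0 \<le> min_dist d Dmax x G e - min_dist d Dmax x (insert u G) e" by simp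
  qed
  show ?thesis
  proof (cases "min_dist d Dmax x G e \<le> min_dist d Dmax x Q e")
    case True
    have "0 \<le> (\<Sum>u\<in>Q-G. min_dist d Dmax x G e - min_dist d Dmax x (insert u G) e)"
      by (rule sum_nonneg) (rule nn)
    then show ?thesis using True by linarith
  next
    case False
    have "Q \<noteq> {}"
    proof
      assume "Q = {}"
      then have "min_dist d Dmax x Q e = Dmax" by (simp add: min_dist_def)
      moreover have "min_dist d Dmax x G e \<le> Dmax" by (rule md_ub[OF G]) (use b in auto)
      ultimately show False using False by linarith
    qed
    then obtain u where u: "u \<in> Q" "min_dist d Dmax x Q e = d x (e u)"
      using md_attain[OF Q \<open>Q \<noteq> {}\<close>, of d Dmax x e] by blast
    have "u \<notin> G" using md_le[OF G, of u d Dmax x e] u False by auto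
    have "min_dist d Dmax x G e - min_dist d Dmax x Q e
        \<le> min_dist d Dmax x G e - min_dist d Dmax x (insert u G) e"
    proof -
      have "min_dist d Dmax x (insert u G) e = min (d x (e u)) (min_dist d Dmax x G e)"
        using u b by (intro md_insert[OF G]) auto
      then show ?thesis using u by simp
    qed
    also have "\<dots> \<le> (\<Sum>u\<in>Q-G. min_dist d Dmax x G e - min_dist d Dmax x (insert u G) e)"
      by (rule member_le_sum) (use u \<open>u \<notin> G\<close> nn Q in auto)
    finally show ?thesis .
  qed
qed

theorem theorem2:
  fixes d :: "real ^ 'n \<Rightarrow> real ^ 'n \<Rightarrow> real"
    and H :: "'h set" and eh :: "'h \<Rightarrow> real ^ 'n"
    and L :: "'l set" and el :: "'l \<Rightarrow> real ^ 'n"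
    and ep :: "'h \<Rightarrow> real ^ 'n"
    and \<rho> Dmax :: real and M :: nat
    and LL :: "'l set" and LH :: "'h set" and gs :: "'h list"
  assumes metric: "Metric_space UNIV d"
    and H_fin: "finite H" and H_ne: "H \<noteq> {}"
    and L_fin: "finite L"
    and rho_nonneg: "\<rho> \<ge> 0"
    and proxy: "\<forall>h\<in>H. d (eh h) (ep h) \<le> \<rho>"
    and Dmax: "\<forall>x\<in>eh ` H \<union> el ` L \<union> ep ` H. \<forall>y\<in>eh ` H \<union> el ` L \<union> ep ` H. d x y < Dmax"
    and M: "1 \<le> M" "M \<le> card H"
    and LL: "LL \<subseteq> L" "card LL \<le> M"
      "\<forall>L'. L' \<subseteq> L \<and> card L' \<le> M \<longrightarrow> cov d Dmax H eh L' el \<le> cov d Dmax H eh LL el"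
    and LH: "LH \<subseteq> H" "card LH \<le> M"
      "\<forall>S. S \<subseteq> H \<and> card S \<le> M \<longrightarrow> cov d Dmax H eh S eh \<le> cov d Dmax H eh LH eh"
    and LL_pos: "cov d Dmax H eh LL el > 0"
    and greedy: "greedy_run d Dmax H eh H ep M gs"
  shows "cov d Dmax H eh (set gs) ep
    \<ge> (1 - 1 / exp 1) * ((cov d Dmax H eh LH eh / cov d Dmax H eh LL el) * cov d Dmax H eh LL el - \<rho>)"
proof -
  define m where "m S h = min_dist d Dmax (eh h) S ep" for S h
  define f where "f S = cov d Dmax H eh S ep" for S
  define c where "c = real (card H)"
  have c: "c > 0" using H_fin H_ne by (simp add: c_def card_gt_0_iff)
  have hD: "\<forall>h\<in>H. \<forall>s\<in>H. d (eh h) (ep s) \<le> Dmax" using Dmax by (meson UnCI image_eqI less_imp_le)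
  have LHfin: "finite LH" using LH(1) H_fin finite_subset by blast
  have fdef: "f S = (\<Sum>h\<in>H. Dmax - m S h) / c" for S
    by (simp add: f_def cov_def m_def c_def)
  have A: "f (insert u G) - f G = (\<Sum>h\<in>H. m G h - m (insert u G) h) / c" for u G
    unfolding fdef by (simp add: diff_divide_distrib[symmetric] sum_subtractf[symmetric])
  have mono: "f G \<le> f (insert u G)" if "G \<subseteq> H" "u \<in> H" for u G
  proof -
    have "0 \<le> (\<Sum>h\<in>H. m G h - m (insert u G) h) / c"
      using that c hD H_fin finite_subset[OF that(1) H_fin]
      by (intro divide_nonneg_pos sum_nonneg) (auto simp: m_def md_insert subset_iff)
    then show ?thesis using A[of u G] by linarith
  qed
  have B: "f LH - f G \<le> (\<Sum>u\<in>LH-G. f (insert u G) - f G)" if G: "G \<subseteq> H" for G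
  proof -
    have Gf: "finite G" using G H_fin finite_subset by blast
    have "f LH - f G = (\<Sum>h\<in>H. m G h - m LH h) / c"
      unfolding fdef by (simp add: diff_divide_distrib[symmetric] sum_subtractf[symmetric])
    also have "\<dots> \<le> (\<Sum>h\<in>H. \<Sum>u\<in>LH-G. m G h - m (insert u G) h) / c"
      unfolding m_def using c G LH(1) hD
      by (intro divide_right_mono sum_mono pw[OF Gf LHfin]) auto
    also have "\<dots> = (\<Sum>u\<in>LH-G. \<Sum>h\<in>H. m G h - m (insert u G) h) / c"
      by (subst sum.swap) simp
    also have "\<dots> = (\<Sum>u\<in>LH-G. f (insert u G) - f G)"
      by (simp add: A sum_divide_distrib)
    finally show ?thesis .
  qed
  define F where "F i = f (set (take i gs))" for i
  define OPT where "OPT = f LH"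
  have glen: "length gs = M" using greedy by (simp add: greedy_run_def)
  have Gsub: "set (take i gs) \<subseteq> H" if "i \<le> M" for i
  proof
    fix x assume "x \<in> set (take i gs)"
    then obtain j where "j < i" "j < length gs" "x = gs ! j"
      by (auto simp: in_set_conv_nth)
    then show "x \<in> H" using greedy glen that by (auto simp: greedy_run_def)
  qed
  have step: "OPT - F (Suc i) \<le> (1 - 1 / real M) * (OPT - F i)" if i: "i < M" for i
  proof -
    let ?G = "set (take i gs)"
    have G: "?G \<subseteq> H" using Gsub i by simp
    have gi: "gs ! i \<in> H - ?G"
      and gmax: "\<forall>l\<in>H - ?G. f (insert l ?G) - f ?G \<le> f (insert (gs ! i) ?G) - f ?G"
      using greedy i by (auto simp: greedy_run_def f_def)
    have Fs: "F (Suc i) = f (insert (gs ! i) ?G)"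
      using i glen by (simp add: F_def take_Suc_conv_app_nth)
    define \<delta> where "\<delta> = F (Suc i) - F i"
    have dnn: "0 \<le> \<delta>" using mono[OF G, of "gs ! i"] gi Fs by (simp add: \<delta>_def F_def)
    have "OPT - F i \<le> (\<Sum>u\<in>LH-?G. f (insert u ?G) - f ?G)"
      using B[OF G] by (simp add: OPT_def F_def)
    also have "\<dots> \<le> (\<Sum>u\<in>LH-?G. \<delta>)"
      using gmax LH(1) Fs by (intro sum_mono) (auto simp: \<delta>_def F_def)
    also have "\<dots> = real (card (LH - ?G)) * \<delta>" by simp
    also have "\<dots> \<le> real M * \<delta>"
    proof -
      have "card (LH - ?G) \<le> M" using LH(2) card_mono[OF LHfin, of "LH - ?G"] by auto
      then show ?thesis using dnn by (simp add: mult_right_mono)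
    qed
    finally have "OPT - F i \<le> real M * \<delta>" .
    then have "(OPT - F i) / real M \<le> \<delta>" using M(1) by (simp add: divide_le_eq mult.commute)
    then show ?thesis by (simp add: \<delta>_def algebra_simps)
  qed
  have F0: "F 0 = 0" by (simp add: F_def fdef m_def min_dist_def)
  have iter: "i \<le> M \<Longrightarrow> OPT - F i \<le> (1 - 1 / real M) ^ i * OPT" for i
  proof (induction i)
    case 0 then show ?case by (simp add: F0)
  next
    case (Suc i)
    have q: "0 \<le> 1 - 1 / real M" using M(1) by simp
    have "OPT - F (Suc i) \<le> (1 - 1 / real M) * (OPT - F i)" using step Suc by simp
    also have "\<dots> \<le> (1 - 1 / real M) * ((1 - 1 / real M) ^ i * OPT)"
      using Suc q by (intro mult_left_mono) auto
    finally show ?case by simp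
  qed
  have FM: "F M = cov d Dmax H eh (set gs) ep" using glen by (simp add: F_def f_def)
  have tri: "d (eh h) (ep s) \<le> d (eh h) (eh s) + d (eh s) (ep s)" for h s
    using Metric_space.triangle[OF metric] by auto
  have prox: "m LH h \<le> min_dist d Dmax (eh h) LH eh + \<rho>" if h: "h \<in> H" for h
  proof (cases "LH = {}")
    case True then show ?thesis using rho_nonneg by (simp add: m_def min_dist_def)
  next
    case False
    then obtain s where s: "s \<in> LH" "min_dist d Dmax (eh h) LH eh = d (eh h) (eh s)"
      using md_attain[OF LHfin False, of d Dmax "eh h" eh] by blast
    have "m LH h \<le> d (eh h) (ep s)" unfolding m_def by (rule md_le[OF LHfin s(1)])
    also have "\<dots> \<le> d (eh h) (eh s) + \<rho>" using tri[of h s] proxy s(1) LH(1) by force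
    finally show ?thesis using s by simp
  qed
  have OPTge: "OPT \<ge> cov d Dmax H eh LH eh - \<rho>"
  proof -
    have "(\<Sum>h\<in>H. Dmax - min_dist d Dmax (eh h) LH eh) - c * \<rho> = (\<Sum>h\<in>H. Dmax - min_dist d Dmax (eh h) LH eh - \<rho>)"
      by (simp add: sum_subtractf c_def)
    also have "\<dots> \<le> (\<Sum>h\<in>H. Dmax - m LH h)" using prox by (intro sum_mono) force
    finally have "((\<Sum>h\<in>H. Dmax - min_dist d Dmax (eh h) LH eh) - c * \<rho>) / c \<le> (\<Sum>h\<in>H. Dmax - m LH h) / c"
      using c by (intro divide_right_mono) auto
    moreover have "((\<Sum>h\<in>H. Dmax - min_dist d Dmax (eh h) LH eh) - c * \<rho>) / c = (\<Sum>h\<in>H. Dmax - min_dist d Dmax (eh h) LH eh) / c - \<rho>"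
      using c by (simp add: diff_divide_distrib)
    ultimately have "(\<Sum>h\<in>H. Dmax - min_dist d Dmax (eh h) LH eh) / c - \<rho> \<le> (\<Sum>h\<in>H. Dmax - m LH h) / c"
      by simp
    then show ?thesis by (simp add: OPT_def fdef cov_def c_def)
  qed
  have OPTnn: "0 \<le> OPT"
  proof -
    have "0 \<le> (\<Sum>h\<in>H. Dmax - m LH h) / c" using c hD LH(1) LHfin
      by (intro divide_nonneg_pos sum_nonneg) (auto simp: m_def intro!: md_ub)
    then show ?thesis by (simp add: OPT_def fdef)
  qed
  have qb: "(1 - 1 / real M) ^ M \<le> 1 / exp 1"
  proof -
    have "(1 - 1 / real M) ^ M \<le> exp (- 1 / real M) ^ M"
      using M(1) exp_ge_add_one_self[of "- 1 / real M"] by (intro power_mono) auto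
    also have "\<dots> = exp (real M * (- 1 / real M))" by (rule exp_of_nat_mult[symmetric])
    also have "\<dots> = 1 / exp 1" using M(1) by (simp add: exp_minus field_simps)
    finally show ?thesis .
  qed
  have e1: "0 \<le> 1 - 1 / exp (1::real)" by simp
  have "(1 - 1 / exp 1) * (cov d Dmax H eh LH eh - \<rho>) \<le> (1 - 1 / exp 1) * OPT"
    using OPTge e1 by (intro mult_left_mono) auto
  also have "\<dots> \<le> (1 - (1 - 1 / real M) ^ M) * OPT"
    using qb OPTnn by (intro mult_right_mono) auto
  also have "\<dots> \<le> F M" using iter[of M] by (simp add: algebra_simps)
  finally show ?thesis using LL_pos FM by simp
qed

end
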